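(* Let $q=4$, $e=6$, and $n=65921=1+2q^3+q^4+q^8$. Then $$g_{n,q}\equiv S_3^2+S_4^{q^2+1}\pmod{x^{q^e}-x},$$ and $g_{n,q}$ is a permutation polynomial of $\mathbb{F}_{q^e}=\mathbb{F}_{4^6}$.
   Context: For a prime power $q$ with characteristic $p$ and integer $n\ge0$, $g_{n,q}\in\mathbb{F}_p[x]$ is the unique polynomial satisfying $\sum_{a\in\mathbb{F}_q}(x+a)^n=g_{n,q}(x^q-x)$. For a positive integer $m$, $S_m=x+x^q+\cdots+x^{q^{m-1}}\in\mathbb{F}_p[x]$; exponents on $S_m$ denote powers of polynomials. A polynomial $f$ is a permutation polynomial of $\mathbb{F}_Q$ if $c\mapsto f(c)$ is a bijection of $\mathbb{F}_Q$. *)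

theory Defs
  imports "HOL-Computational_Algebra.Polynomial"
begin

definition Fq :: "nat \<Rightarrow> 'a::field set" where
  "Fq q = {c. c ^ q = c}"

text \<open>g_{n,q}: the unique polynomial g with sum over a in F_q of (x+a)^n = g(x^q - x).
  Polynomials are taken over the ambient field 'a (which contains F_p).\<close>
definition gpoly :: "nat \<Rightarrow> nat \<Rightarrow> 'a::field poly" where
  "gpoly n q = (THE g. (\<Sum>a\<in>Fq q. [:a, 1:] ^ n) = pcompose g (monom 1 q - [:0, 1:]))"

definition Spoly :: "nat \<Rightarrow> nat \<Rightarrow> 'a::field poly" where
  "Spoly q m = (\<Sum>i<m. monom 1 (q ^ i))"

end

theory Submission
  imports Defs
begin


lemma c2_neg: fixes x :: "'b::comm_ring_1" assumes "(2::'b) = 0" shows "- x = x"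
proof -
  have "x + x = 2 * x" by simp
  then have "x + x = 0" using assms by simp
  then show ?thesis by (simp add: add_eq_0_iff)
qed

lemma c2_frob2: fixes x :: "'b::comm_ring_1" assumes "(2::'b) = 0" shows "(x + y)^2 = x^2 + y^2"
proof -
  have "(x+y)^2 = x^2 + y^2 + 2*x*y" by (simp add: power2_eq_square algebra_simps)
  then show ?thesis using assms by simp
qed

lemma c2_frob: fixes x :: "'b::comm_ring_1" assumes "(2::'b) = 0" shows "(x + y)^(2^k) = x^(2^k) + y^(2^k)"
proof (induction k)
  case 0 then show ?case by simp
next
  case (Suc k)
  have "(x + y)^(2^Suc k) = ((x+y)^(2^k))^2" by (simp add: power_mult[symmetric] mult.commute)
  also have "\<dots> = (x^(2^k))^2 + (y^(2^k))^2" using Suc c2_frob2[OF assms] by simp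
  also have "\<dots> = x^(2^Suc k) + y^(2^Suc k)" by (simp add: power_mult[symmetric] mult.commute)
  finally show ?case .
qed

lemma c2_frob_sum: fixes f :: "'c \<Rightarrow> 'b::comm_ring_1" assumes "(2::'b) = 0" "finite I"
  shows "(\<Sum>i\<in>I. f i)^(2^k) = (\<Sum>i\<in>I. f i ^ (2^k))"
  using assms(2) by (induction I rule: finite_induct) (simp_all add: c2_frob[OF assms(1)] power_0_left)

lemma c2_frob_diff: fixes x :: "'b::comm_ring_1" assumes "(2::'b) = 0" shows "(x - y)^(2^k) = x^(2^k) - y^(2^k)"
proof -
  have h1: "x - y = x + y" using c2_neg[OF assms, of y] by (metis diff_conv_add_uminus)
  have h2: "x^(2^k) - y^(2^k) = x^(2^k) + y^(2^k)" using c2_neg[OF assms, of "y^(2^k)"] by (metis diff_conv_add_uminus)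
  show ?thesis by (simp only: h1 h2 c2_frob[OF assms])
qed



lemma char2: assumes "card (UNIV :: 'a::{field, finite} set) = 4096" shows "(2::'a) = 0"
proof -
  have "(\<Sum>x\<in>(UNIV::'a set). x + 1) = (\<Sum>x\<in>UNIV. x)"
    by (rule sum.reindex_bij_witness[where j="\<lambda>x. x + 1" and i="\<lambda>x. x - 1"]) auto
  then have "of_nat (card (UNIV::'a set)) = (0::'a)" by (simp add: sum.distrib)
  then have "(4096::'a) = 0" using assms by simp
  moreover have "(2::'a)^12 = 4096" by simp
  ultimately have h: "(2::'a)^12 = 0" by metis
  then show ?thesis by (metis power_eq_0_iff)
qed

lemma fermat: assumes "card (UNIV :: 'a::{field, finite} set) = 4096" shows "(c::'a)^4096 = c"
proof (cases "c = 0")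
  case True then show ?thesis by simp
next
  case False
  define U where "U = (UNIV::'a set) - {0}"
  have fU: "finite U" unfolding U_def by simp
  have cU: "card U = 4095" unfolding U_def using assms by (simp add: card_Diff_singleton)
  have "(\<Prod>x\<in>U. c * x) = (\<Prod>x\<in>U. x)"
    by (rule prod.reindex_bij_witness[where j="\<lambda>x. c * x" and i="\<lambda>x. x / c"]) (use False in \<open>auto simp: U_def\<close>)
  then have "c ^ 4095 * (\<Prod>x\<in>U. x) = (\<Prod>x\<in>U. x)" using cU by (simp add: prod.distrib)
  moreover have "(\<Prod>x\<in>U. x) \<noteq> 0" using fU by (simp add: U_def)
  ultimately have "c ^ 4095 = 1" by simp
  then show ?thesis proof -
    have "c^4096 = c * c^4095" by (simp flip: power_Suc)
    then show ?thesis using \<open>c^4095 = 1\<close> by simp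
  qed
qed



lemma unit_pow: assumes "card (UNIV :: 'a::{field, finite} set) = 4096" "(c::'a) \<noteq> 0" shows "c^4095 = 1"
proof -
  have "c * c^4095 = c * 1" using fermat[OF assms(1), of c] by (simp flip: power_Suc)
  then show ?thesis using assms(2) by (metis mult_left_cancel)
qed

lemma exw: assumes "card (UNIV :: 'a::{field, finite} set) = 4096" shows "\<exists>w::'a. w^2+w+1 = 0"
proof (rule ccontr)
  assume nw: "\<not> (\<exists>w::'a. w^2+w+1 = 0)"
  define p :: "'a poly" where "p = monom 1 1365 - 1"
  have "coeff p 1365 = 1" unfolding p_def by simp
  then have p0: "p \<noteq> 0" by auto
  have dp: "degree p \<le> 1365" unfolding p_def
    by (rule degree_diff_le) (simp_all add: degree_monom_eq)
  have sub: "(UNIV::'a set) - {0} \<subseteq> {x. poly p x = 0}"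
  proof
    fix c :: 'a assume "c \<in> UNIV - {0}"
    then have c0: "c \<noteq> 0" by simp
    define d where "d = c^1365"
    have "d^3 = c^4095" unfolding d_def by (simp flip: power_mult)
    then have d3: "d^3 = 1" using unit_pow[OF assms c0] by simp
    have "(d - 1) * (d^2+d+1) = d^3 - 1" by (simp add: algebra_simps power2_eq_square power3_eq_cube)
    then have "(d - 1) * (d^2+d+1) = 0" using d3 by simp
    then have "d = 1" using nw by auto
    then show "c \<in> {x. poly p x = 0}" unfolding p_def d_def by (simp add: poly_monom)
  qed
  have "card ((UNIV::'a set) - {0}) = 4095" using assms by (simp add: card_Diff_singleton)
  moreover have "card ((UNIV::'a set) - {0}) \<le> card {x. poly p x = 0}" by (rule card_mono[OF _ sub]) simp
  moreover have "card {x. poly p x = 0} \<le> degree p" by (rule card_poly_roots_bound[OF p0])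
  ultimately show False using dp by simp
qed


lemma c2_add0: fixes x :: "'b::comm_ring_1" assumes "(2::'b) = 0" shows "(x + y = 0) = (x = y)"
proof -
  have "x + y = 0 \<longleftrightarrow> x = - y" by (simp add: eq_neg_iff_add_eq_0)
  then show ?thesis using c2_neg[OF assms, of y] by simp
qed

lemma Fq4: assumes "(2::'a::field) = 0" "w^2+w+1 = (0::'a)" shows "Fq 4 = {0, 1, w, w+1}"
proof -
  have fac: "c^4 - c = c * (c+1) * (c+w) * (c+w+1)" for c :: 'a
  proof -
    have e: "c^4 - c = c * (c+1) * (c+w) * (c+w+1) - 2 * (c^3 + c*w*(c^2+c)) - (c^2+c)*(w^2+w+1)"
      by algebra
    have "2 * (c^3 + c*w*(c^2+c)) = 0" using assms(1) by (simp only: mult_zero_left)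
    moreover have "(c^2+c)*(w^2+w+1) = 0" using assms(2) by (simp only: mult_zero_right)
    ultimately show ?thesis using e by (simp only: diff_zero)
  qed
  show ?thesis
  proof (rule set_eqI)
    fix c :: 'a
    have "c \<in> Fq 4 \<longleftrightarrow> c^4 - c = 0" by (simp add: Fq_def)
    also have "\<dots> \<longleftrightarrow> c = 0 \<or> c + 1 = 0 \<or> c + w = 0 \<or> c + (w + 1) = 0" by (simp only: fac mult_eq_0_iff add.assoc) blast
    also have "\<dots> \<longleftrightarrow> c \<in> {0, 1, w, w+1}"
      by (simp only: c2_add0[OF assms(1), of c 1] c2_add0[OF assms(1), of c w] c2_add0[OF assms(1), of c "w+1"] insert_iff empty_iff simp_thms)
    finally show "c \<in> Fq 4 \<longleftrightarrow> c \<in> {0, 1, w, w+1}" .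
  qed
qed

lemma t1: fixes P1 P2 P3 P4 W :: "'b::comm_ring_1"
  assumes "(2::'b) = 0" "W*W+W+1 = 0"
  shows "P1*P2*P3*P4 + (P1+1)*(P2+1)*(P3+1)*(P4+1) + (P1+W)*(P2+W*W)*(P3+W)*(P4+W)
     + (P1+(W+1))*(P2+(W+1)*(W+1))*(P3+(W+1))*(P4+(W+1)) = P3*P4 + P1*P4 + P1*P3 + P2"
proof -
  have e: "P1*P2*P3*P4 + (P1+1)*(P2+1)*(P3+1)*(P4+1) + (P1+W)*(P2+W*W)*(P3+W)*(P4+W)
     + (P1+(W+1))*(P2+(W+1)*(W+1))*(P3+(W+1))*(P4+(W+1)) - (P3*P4 + P1*P4 + P1*P3 + P2)
     = (W*W+W+1)*(2 + 5*W + 3*W^2 + 2*W^3 + 2*P4 + 2*P4*W + 2*P4*W^2 + 2*P3 + 2*P3*W + 2*P3*W^2 + P3*P4 + 2*P3*P4*W + P2 + 2*P2*W + 2*P2*P4 + 2*P2*P3 + 2*P1 + 2*P1*W + 2*P1*W^2 + P1*P4 + 2*P1*P4*W + P1*P3 + 2*P1*P3*W + 2*P1*P3*P4 + 2*P1*P2) + 2*(-W + P2*P3*P4 + P2*P3*P4*W + P1*P2*P4 + P1*P2*P4*W + P1*P2*P3 + P1*P2*P3*W + 2*P1*P2*P3*P4)" by (simp add: algebra_simps power2_eq_square power3_eq_cube)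
  show ?thesis using e unfolding assms by simp
qed


abbreviation XX :: "'a::field poly" where "XX \<equiv> [:0, 1:]"

lemma two_poly: assumes "(2::'a::field) = 0" shows "(2::'a poly) = 0"
  using assms by (simp add: numeral_poly)

lemma monom_X: "monom (1::'a::field) n = XX ^ n"
  by (simp add: monom_altdef)

lemma pc_Xpow: "pcompose (XX ^ n) q = (q::'a::field poly) ^ n"
  by (induction n) (simp_all add: pcompose_mult pcompose_pCons pcompose_1)

lemma Spoly_X: "(Spoly 4 k :: 'a::field poly) = (\<Sum>i<k. XX ^ (4^i))"
  by (simp add: Spoly_def monom_X)

lemma pc_S: assumes "(2::'a::field) = 0"
  shows "pcompose (Spoly 4 k) (monom 1 4 - XX) = (XX::'a poly) ^ (4^k) - XX"
proof -
  have 2: "(2::'a poly) = 0" by (rule two_poly[OF assms])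
  have "pcompose (Spoly 4 k) (monom 1 4 - XX) = (\<Sum>i<k. ((XX::'a poly)^4 - XX) ^ (4^i))"
    by (simp add: Spoly_X pcompose_sum pc_Xpow monom_X)
  also have "\<dots> = (\<Sum>i<k. (XX::'a poly) ^ (4^Suc i) - XX ^ (4^i))"
  proof (rule sum.cong[OF refl])
    fix i
    have e: "(2::nat)^(2*i) = 4^i" by (simp add: power_mult)
    have "((XX::'a poly)^4 - XX) ^ (4^i) = ((XX::'a poly)^4 - XX) ^ (2^(2*i))" by (simp add: power_mult)
    also have "\<dots> = (XX^4)^(2^(2*i)) - XX^(2^(2*i))" by (rule c2_frob_diff[OF 2])
    also have "\<dots> = (XX::'a poly) ^ (4^Suc i) - XX ^ (4^i)" by (simp add: power_mult[symmetric] e)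
    finally show "((XX::'a poly)^4 - XX) ^ (4^i) = (XX::'a poly) ^ (4^Suc i) - XX ^ (4^i)" .
  qed
  also have "\<dots> = XX ^ (4^k) - XX" by (subst sum_lessThan_telescope) simp
  finally show ?thesis .
qed



lemma pw4: assumes "(a::'a::comm_ring_1)^4 = a" shows "a^(2^(2*j)) = a"
proof (induction j)
  case 0 then show ?case by simp
next
  case (Suc j)
  have "a^(2^(2*Suc j)) = (a^(2^(2*j)))^4" by (simp add: power_mult[symmetric] mult.commute)
  then show ?case using Suc assms by simp
qed

lemma lin_eq: "[:a, 1:] = XX + [:a::'a::field:]" by simp

lemma pow_split: "(y::'b::comm_ring_1)^65921 = y * y^(2^7) * y^(2^8) * y^(2^16)"
proof -
  have "y^65921 = y^(1 + 2^7 + 2^8 + 2^16)" by simp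
  also have "\<dots> = y^1 * y^(2^7) * y^(2^8) * y^(2^16)" by (simp only: power_add)
  finally show ?thesis by (simp only: power_one_right)
qed

lemma term_gen: fixes X a :: "'b::comm_ring_1" assumes "(2::'b) = 0" "a^4 = a"
  shows "(X + a)^65921 = (X + a) * (X^(2^7) + a*a) * (X^(2^8) + a) * (X^(2^16) + a)"
proof -
  have fr: "(X + a)^(2^k) = X^(2^k) + a^(2^k)" for k
    by (rule c2_frob[OF assms(1)])
  have a8: "a^(2^8) = a" using pw4[OF assms(2), of 4] by simp
  have a16: "a^(2^16) = a" using pw4[OF assms(2), of 8] by simp
  have a7: "a^(2^7) = a*a"
  proof -
    have h: "a^64 = a" using pw4[OF assms(2), of 3] by simp
    have "a^(2^7) = a^64 * a^64" by (simp flip: power_add)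
    then show ?thesis using h by simp
  qed
  show ?thesis by (simp only: pow_split fr a8 a16 a7)
qed

lemma sum_id: assumes "(2::'a::field) = 0" "w^2+w+1 = (0::'a)"
  shows "(\<Sum>a\<in>Fq 4. [:a, 1:]^65921) =
     (XX::'a poly)^(2^8)*XX^(2^16) + XX*XX^(2^16) + XX*XX^(2^8) + XX^(2^7)"
proof -
  have 2: "(2::'a poly) = 0" by (rule two_poly[OF assms(1)])
  have w0: "w \<noteq> 0" using assms(2) by auto
  have w1: "w \<noteq> 1"
  proof
    assume "w = 1" then have "(2::'a) + 1 = 0" using assms(2) by simp
    then show False using assms(1) by simp
  qed
  have w2: "w + 1 \<noteq> 0" using w1 c2_add0[OF assms(1), of w 1] by simp
  have w3: "w + 1 \<noteq> 1" using w0 by simp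
  have w4: "w + 1 \<noteq> w" by simp
  have r4: "[:a:]^4 = [:a:]" if "a \<in> Fq 4" for a::'a using that by (simp add: Fq_def poly_const_pow)
  define f where "f A = (XX + A) * (XX^(2^7) + A*A) * (XX^(2^8) + A) * (XX^(2^16) + A)" for A :: "'a poly"
  have "(\<Sum>a\<in>Fq 4. [:a, 1:]^65921) = (\<Sum>a\<in>Fq 4. f [:a:])"
  proof (rule sum.cong[OF refl])
    fix a :: 'a assume "a \<in> Fq (4::nat)"
    have "[:a, 1:]^65921 = (XX + [:a:])^65921" by (simp only: lin_eq[of a, symmetric])
    also have "\<dots> = f [:a:]" unfolding f_def by (rule term_gen[OF 2 r4[OF \<open>a \<in> Fq 4\<close>]])
    finally show "[:a, 1:]^65921 = f [:a:]" .
  qed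
  also have "\<dots> = f [:0:] + (f [:1:] + (f [:w:] + f [:w+1:]))"
    unfolding Fq4[OF assms] using w0 w1 w2 w3 w4 by simp
  also have "\<dots> = (XX::'a poly)^(2^8)*XX^(2^16) + XX*XX^(2^16) + XX*XX^(2^8) + XX^(2^7)"
  proof -
    have W: "[:w:]*[:w:]+[:w:]+1 = (0::'a poly)"
    proof -
      have "[:w:]*[:w:]+[:w:]+1 = [:w^2+w+1:]" by (simp add: power2_eq_square one_pCons)
      then show ?thesis using assms(2) by simp
    qed
    have c1: "[:w+1:] = [:w:] + (1::'a poly)" by (simp add: one_pCons)
    have c0: "[:0:] = (0::'a poly)" by simp
    have c11: "[:1:] = (1::'a poly)" by (simp add: one_pCons)
    have t: "f 0 + f 1 + f [:w:] + f ([:w:] + 1) = (XX::'a poly)^(2^8)*XX^(2^16) + XX*XX^(2^16) + XX*XX^(2^8) + XX^(2^7)"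
      unfolding f_def using t1[OF 2 W, of XX "XX^(2^7)" "XX^(2^8)" "XX^(2^16)"]
      by (simp only: add_0_right mult_zero_left mult_1_left)
    have e0: "f [:0:] = f 0" by simp
    have e1: "f [:1:] = f 1" by (simp only: one_pCons)
    have e2: "f [:w+1:] = f ([:w:] + 1)" by (simp only: c1)
    show ?thesis using t by (simp only: e0 e1 e2 add.assoc)
  qed
  finally show ?thesis .
qed



lemma t2: fixes Y P P3 P4 :: "'b::comm_ring_1" assumes "(2::'b) = 0"
  shows "(Y - P)^2 + (P3 - P)*(P4 - P) = P3*P4 + P*P4 + P*P3 + Y^2"
proof -
  have "(Y - P)^2 + (P3 - P)*(P4 - P) = P3*P4 + P*P4 + P*P3 + Y^2 + 2*(P*P - Y*P - P*P4 - P*P3)"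
    by (simp add: algebra_simps power2_eq_square)
  then show ?thesis using assms by simp
qed

lemma degT: "degree (monom (1::'a::field) 4 - XX) > 0"
proof -
  have "coeff (monom (1::'a) 4 - XX) 4 \<noteq> 0" by (simp add: coeff_eq_0)
  then have "4 \<le> degree (monom (1::'a) 4 - XX)" by (rule le_degree)
  then show ?thesis by simp
qed

lemma gpoly_eq: assumes "(2::'a::field) = 0" "w^2+w+1 = (0::'a)"
  shows "gpoly 65921 4 = (Spoly 4 3 ^ 2 + Spoly 4 4 * Spoly 4 8 :: 'a poly)"
proof -
  have 2: "(2::'a poly) = 0" by (rule two_poly[OF assms(1)])
  define T where "T = (monom 1 4 - XX :: 'a poly)"
  define g0 where "g0 = (Spoly 4 3 ^ 2 + Spoly 4 4 * Spoly 4 8 :: 'a poly)"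
  have pc: "pcompose g0 T = ((XX::'a poly)^(4^3) - XX)^2 + (XX^(4^4) - XX)*(XX^(4^8) - XX)"
    unfolding g0_def T_def by (simp only: pcompose_add pcompose_mult power2_eq_square pc_S[OF assms(1)])
  also have "\<dots> = (XX::'a poly)^(4^4)*XX^(4^8) + XX*XX^(4^8) + XX*XX^(4^4) + (XX^(4^3))^2"
    by (rule t2[OF 2])
  also have "\<dots> = (XX::'a poly)^(2^8)*XX^(2^16) + XX*XX^(2^16) + XX*XX^(2^8) + XX^(2^7)"
    by (simp flip: power_mult)
  also have "\<dots> = (\<Sum>a\<in>Fq 4. [:a, 1:]^65921)" by (rule sum_id[OF assms, symmetric])
  finally have ex: "(\<Sum>a\<in>Fq 4. [:a, 1:]^65921) = pcompose g0 T" by simp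
  show ?thesis
    unfolding gpoly_def g0_def[symmetric] T_def[symmetric]
  proof (rule the_equality)
    show "(\<Sum>a\<in>Fq 4. [:a, 1:]^65921) = pcompose g0 T" by (rule ex)
  next
    fix g assume "(\<Sum>a\<in>Fq 4. [:a, 1:]^65921) = pcompose g T"
    then have "pcompose (g - g0) T = 0" using ex by (simp add: pcompose_diff)
    then have "g - g0 = 0" by (rule pcompose_eq_0) (simp add: T_def degT)
    then show "g = g0" by simp
  qed
qed



lemma dvd_gen: fixes S3 S4 S8 M a0 a1 a2 a3 a4 a5 a6 a7 :: "'b::comm_ring_1"
  assumes "(2::'b) = 0" and hS8: "S8 = a0+a1+a2+a3+a4+a5+a6+a7" and hS4: "S4 = a0+a1+a2+a3"
    and h16: "S4^16 = a2+a3+a4+a5" and hM: "M = a6 - a0" and hM4: "M^4 = a7 - a1"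
  shows "M dvd (S3^2 + S4*S8 - (S3^2 + S4^17))"
proof -
  have p17: "S4^17 = S4 * S4^16" by (simp flip: power_Suc)
  have "S3^2 + S4*S8 - (S3^2 + S4^17) = S4*(S8 - S4^16)" by (simp add: p17 algebra_simps)
  also have "S8 - S4^16 = M + M^4 + 2*(a0+a1)" unfolding hM4 by (simp add: hS8 h16 hM algebra_simps)
  also have "M + M^4 + 2*(a0+a1) = M + M^4" using assms(1) by simp
  also have "S4 * (M + M^4) = M * (S4 * (1 + M^3))" by (simp add: algebra_simps power_Suc[symmetric] power3_eq_cube power4_eq_xxxx)
  finally show ?thesis by simp
qed

lemma sum4: fixes f :: "nat \<Rightarrow> 'b::comm_monoid_add" shows "(\<Sum>i<4. f i) = f 0 + f 1 + f 2 + (f 3 :: 'b::comm_monoid_add)"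
proof -
  have "{..<4::nat} = {0,1,2,3}" by auto
  then show ?thesis by (simp add: add.assoc)
qed

lemma sum3: fixes f :: "nat \<Rightarrow> 'b::comm_monoid_add" shows "(\<Sum>i<3. f i) = f 0 + f 1 + (f 2 :: 'b::comm_monoid_add)"
proof -
  have "{..<3::nat} = {0,1,2}" by auto
  then show ?thesis by (simp add: add.assoc)
qed

lemma sum8: fixes f :: "nat \<Rightarrow> 'b::comm_monoid_add" shows "(\<Sum>i<8. f i) = f 0 + f 1 + f 2 + f 3 + f 4 + f 5 + f 6 + (f 7 :: 'b::comm_monoid_add)"
proof -
  have "{..<8::nat} = {0,1,2,3,4,5,6,7}" by auto
  then show ?thesis by (simp add: add.assoc)
qed

lemma dvd_part: assumes "(2::'a::field) = 0"
  shows "(monom 1 (4^6) - XX) dvd (Spoly 4 3 ^ 2 + Spoly 4 4 * Spoly 4 8 - ((Spoly 4 3)^2 + (Spoly 4 4)^(4^2+1)) :: 'a poly)"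
proof -
  have 2: "(2::'a poly) = 0" by (rule two_poly[OF assms])
  have e17: "(4::nat)^2 + 1 = 17" by simp
  have S8: "Spoly 4 8 = (XX::'a poly) + XX^4 + XX^16 + XX^64 + XX^256 + XX^1024 + XX^4096 + XX^16384"
    by (simp add: Spoly_X sum8)
  have S4: "Spoly 4 4 = (XX::'a poly) + XX^4 + XX^16 + XX^64"
    by (simp add: Spoly_X sum4)
  have "(Spoly 4 4 :: 'a poly)^16 = (Spoly 4 4)^(2^4)" by simp
  also have "\<dots> = (\<Sum>i<4. ((XX::'a poly)^(4^i))^(2^4))" unfolding Spoly_X by (rule c2_frob_sum[OF 2]) simp
  also have "\<dots> = (XX::'a poly)^16 + XX^64 + XX^256 + XX^1024" by (simp add: sum4 flip: power_mult)
  finally have h16: "(Spoly 4 4 :: 'a poly)^16 = XX^16 + XX^64 + XX^256 + XX^1024" .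
  have hM: "monom 1 (4^6) - XX = (XX::'a poly)^4096 - XX" by (simp add: monom_X)
  have "((XX::'a poly)^4096 - XX)^4 = ((XX::'a poly)^4096 - XX)^(2^2)" by simp
  also have "\<dots> = (XX^4096)^(2^2) - XX^(2^2)" by (rule c2_frob_diff[OF 2])
  also have "\<dots> = XX^16384 - XX^4" by (simp flip: power_mult)
  finally have hM4: "((XX::'a poly)^4096 - XX)^4 = XX^16384 - XX^4" .
  show ?thesis unfolding e17 hM
    by (rule dvd_gen[OF 2 S8 S4 h16 refl hM4])
qed

lemma key_ring: fixes xa xb xc xd xe xf :: "'b::comm_ring_1" assumes "(2::'b) = 0"
  shows "(xc+xd+xe)^2 + (xc+xd+xe+xf)*(xe+xf+xa+xb) + (xe+xf+xa)^2 + (xe+xf+xa+xb)*(xa+xb+xc+xd)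
     = (xb+xc+xd+xe)^2"
proof -
  have "(xc+xd+xe)^2 + (xc+xd+xe+xf)*(xe+xf+xa+xb) + (xe+xf+xa)^2 + (xe+xf+xa+xb)*(xa+xb+xc+xd)
     - (xb+xc+xd+xe)^2 = 2 * (xf^2 + 2*xe*xf + xe^2 + xd*xf + xd*xe + xc*xf + xc*xe + xb*xf + 2*xa*xf + 2*xa*xe + xa*xd + xa*xc + xa*xb + xa^2)" by (simp add: algebra_simps power2_eq_square)
  then show ?thesis using assms by simp
qed

lemma frob_inj: fixes x y :: "'a::field" assumes "(2::'a) = 0" "x^(2^k) = y^(2^k)" shows "x = y"
proof -
  have "(x - y)^(2^k) = 0" using c2_frob_diff[OF assms(1), of x y k] assms(2) by simp
  then show ?thesis by simp
qed



lemma keyG: fixes c :: "'a::field" assumes 2: "(2::'a) = 0" and fe: "\<And>x::'a. x^4096 = x"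
  shows "((c+c^4+c^16)^2 + (c+c^4+c^16+c^64)^17)^16 + ((c+c^4+c^16)^2 + (c+c^4+c^16+c^64)^17)^256
        = (c+c^4+c^16+c^64)^8"
proof -
  define B where "B = c+c^4+c^16"
  define A where "A = c+c^4+c^16+c^64"
  have f4: "(x+y)^4 = x^4 + y^4" for x y :: 'a using c2_frob[OF 2, of x y 2] by simp
  have f16: "(x+y)^16 = x^16 + y^16" for x y :: 'a using c2_frob[OF 2, of x y 4] by simp
  have f256: "(x+y)^256 = x^256 + y^256" for x y :: 'a using c2_frob[OF 2, of x y 8] by simp
  have c16384: "c^16384 = c^4"
  proof -
    have "c^16384 = (c^4096)^4" by (simp flip: power_mult)
    then show ?thesis using fe[of c] by simp
  qed
  have hB16: "B^16 = c^16+c^64+c^256" unfolding B_def by (simp add: f16 flip: power_mult)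
  have hB256: "B^256 = c^256+c^1024+c" unfolding B_def by (simp add: f256 fe flip: power_mult)
  have hA4: "A^4 = c^4+c^16+c^64+c^256" unfolding A_def by (simp add: f4 flip: power_mult)
  have hA16: "A^16 = c^16+c^64+c^256+c^1024" unfolding A_def by (simp add: f16 flip: power_mult)
  have hA256: "A^256 = c^256+c^1024+c+c^4" unfolding A_def by (simp add: f256 fe c16384 flip: power_mult)
  have hA4096: "A^4096 = A" by (rule fe)
  have g16: "(B^2 + A^17)^16 = (B^16)^2 + A^16*A^256"
  proof -
    have "(B^2)^16 = (B^16)^2" by (simp flip: power_mult)
    moreover have "(A^17)^16 = A^16*A^256" by (simp flip: power_mult power_add)
    ultimately show ?thesis by (simp add: f16)
  qed
  have g256: "(B^2 + A^17)^256 = (B^256)^2 + A^256*A^4096"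
  proof -
    have "(B^2)^256 = (B^256)^2" by (simp flip: power_mult)
    moreover have "(A^17)^256 = A^256*A^4096" by (simp flip: power_mult power_add)
    ultimately show ?thesis by (simp add: f256)
  qed
  have A8: "A^8 = (A^4)^2" by (simp flip: power_mult)
  have "(B^2 + A^17)^16 + (B^2 + A^17)^256 = A^8"
    unfolding g16 g256 A8 hA4 hB16 hB256 hA16 hA256 hA4096
    unfolding A_def
    using key_ring[OF 2, where xa=c and xb="c^4" and xc="c^16" and xd="c^64" and xe="c^256" and xf="c^1024"]
    by (simp only: add.assoc)
  then show ?thesis unfolding A_def B_def .
qed

lemma G_inj: fixes c d :: "'a::field" assumes 2: "(2::'a) = 0" and fe: "\<And>x::'a. x^4096 = x"
  and eq: "(c+c^4+c^16)^2 + (c+c^4+c^16+c^64)^17 = (d+d^4+d^16)^2 + (d+d^4+d^16+d^64)^17"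
  shows "c = d"
proof -
  have "(c+c^4+c^16+c^64)^8 = (d+d^4+d^16+d^64)^8"
    using keyG[OF 2 fe, of c] keyG[OF 2 fe, of d] eq by simp
  then have hA: "c+c^4+c^16+c^64 = d+d^4+d^16+d^64"
    using frob_inj[OF 2, where k=3] by simp
  then have "(c+c^4+c^16)^2 = (d+d^4+d^16)^2" using eq by simp
  then have hB: "c+c^4+c^16 = d+d^4+d^16" using frob_inj[OF 2, where k=1] by simp
  have "c^64 = d^64" using hA hB by (metis add_left_cancel)
  then show "c = d" using frob_inj[OF 2, where k=6 and x=c and y=d] by simp
qed

lemma poly_S3: "poly (Spoly 4 3) (c::'a::field) = c + c^4 + c^16"
  by (simp add: Spoly_def poly_sum poly_monom sum3)

lemma poly_S4: "poly (Spoly 4 4) (c::'a::field) = c + c^4 + c^16 + c^64"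
  by (simp add: Spoly_def poly_sum poly_monom sum4)

theorem mainTheorem5:
  assumes "card (UNIV :: 'a::{field, finite} set) = 4 ^ 6"
  shows "(monom 1 (4 ^ 6) - [:0, 1:]) dvd
           (gpoly 65921 4 - ((Spoly 4 3) ^ 2 + (Spoly 4 4) ^ (4 ^ 2 + 1)) :: 'a poly)
         \<and> bij (\<lambda>c::'a. poly (gpoly 65921 4) c)"
proof -
  have card: "card (UNIV :: 'a set) = 4096" using assms by simp
  have 2: "(2::'a) = 0" by (rule char2[OF card])
  have fe: "\<And>x::'a. x^4096 = x" by (rule fermat[OF card])
  obtain w :: 'a where w: "w^2+w+1 = 0" using exw[OF card] by blast
  have g: "gpoly 65921 4 = (Spoly 4 3 ^ 2 + Spoly 4 4 * Spoly 4 8 :: 'a poly)" by (rule gpoly_eq[OF 2 w])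
  have dv: "(monom 1 (4 ^ 6) - [:0, 1:]) dvd
           (gpoly 65921 4 - ((Spoly 4 3) ^ 2 + (Spoly 4 4) ^ (4 ^ 2 + 1)) :: 'a poly)"
    unfolding g by (rule dvd_part[OF 2])
  then obtain r where r: "gpoly 65921 4 - ((Spoly 4 3) ^ 2 + (Spoly 4 4) ^ (4 ^ 2 + 1)) = (monom 1 (4 ^ 6) - [:0, 1:]) * (r :: 'a poly)"
    by (elim dvdE)
  have pe: "poly (gpoly 65921 4) c = (c+c^4+c^16)^2 + (c+c^4+c^16+c^64)^17" for c :: 'a
  proof -
    have "poly (monom 1 (4 ^ 6) - [:0, 1:]) c = 0" using fe[of c] by (simp add: poly_monom)
    then have "poly (gpoly 65921 4 - ((Spoly 4 3) ^ 2 + (Spoly 4 4) ^ (4 ^ 2 + 1))) c = 0"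
      unfolding r by simp
    then show ?thesis by (simp add: poly_S3 poly_S4)
  qed
  have inj: "inj (\<lambda>c::'a. poly (gpoly 65921 4) c)"
  proof (rule injI)
    fix c d :: 'a
    assume "poly (gpoly 65921 4) c = poly (gpoly 65921 4) d"
    then have "(c+c^4+c^16)^2 + (c+c^4+c^16+c^64)^17 = (d+d^4+d^16)^2 + (d+d^4+d^16+d^64)^17"
      by (simp only: pe)
    then show "c = d" by (rule G_inj[OF 2 fe])
  qed
  have "surj (\<lambda>c::'a. poly (gpoly 65921 4) c)" by (rule finite_UNIV_inj_surj[OF _ inj]) simp
  with inj have "bij (\<lambda>c::'a. poly (gpoly 65921 4) c)" by (simp add: bij_def)
  with dv show ?thesis by simp
qed

end
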